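(* Let $R$ be a commutative ring in which $2$ is invertible, let $M$ be a quadratic $R$-space, and let $\alpha\in\mathrm{TransO}(M,\langle\,,\,\rangle)$. Then there exists $\beta(X)\in\mathrm{TransO}(M[X],\langle\,,\,\rangle)$ such that $\beta(1)=\alpha$ and $\beta(0)=\mathrm{Id}$.
   Context: A quadratic space is a finitely generated projective module $M$ with quadratic form $q$ whose bilinear form $\langle x,y\rangle=q(x+y)-q(x)-q(y)$ is non-degenerate. $M[X]=M\otimes_RR[X]$ is the quadratic space over $R[X]$ obtained by extension of scalars, and $\beta(c)$ for $c\in R$ denotes the specialization $X\mapsto c$. ESD transvections on a quadratic space $N$ (over any such ring): for $u,v\in N$ with $u$ unimodular, $q(u)=0$, $\langle u,v\rangle=0$, $r=q(v)$, $\sigma_{u,v}(x)=x+\langle v,x\rangle u-\langle u,x\rangle v-r\langle u,x\rangle u$; $\mathrm{TransO}(N,\langle\,,\,\rangle)$ is the group generated by all of them. *)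

theory Defs
  imports Main "HOL-Computational_Algebra.Polynomial"
begin

definition lin_fun :: "('r::comm_ring_1 \<Rightarrow> 'n::ab_group_add \<Rightarrow> 'n) \<Rightarrow> ('n \<Rightarrow> 'r) \<Rightarrow> bool" where
  "lin_fun sc \<phi> \<longleftrightarrow> (\<forall>x y. \<phi> (x + y) = \<phi> x + \<phi> y) \<and> (\<forall>r x. \<phi> (sc r x) = r * \<phi> x)"

definition unimodular :: "('r::comm_ring_1 \<Rightarrow> 'n::ab_group_add \<Rightarrow> 'n) \<Rightarrow> 'n \<Rightarrow> bool" where
  "unimodular sc u \<longleftrightarrow> (\<exists>\<phi>. lin_fun sc \<phi> \<and> \<phi> u = 1)"

text \<open>Finitely generated projective: direct summand of R^n, i.e. there are
  i = (phi_0,...,phi_{n-1}) : M -> R^n and p : R^n -> M, p(e_k) = x_k, with p o i = id.\<close>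
definition fg_projective :: "('r::comm_ring_1 \<Rightarrow> 'n::ab_group_add \<Rightarrow> 'n) \<Rightarrow> bool" where
  "fg_projective sc \<longleftrightarrow> (\<exists>(n::nat) (xs::nat \<Rightarrow> 'n) (\<phi>s::nat \<Rightarrow> 'n \<Rightarrow> 'r).
      (\<forall>k<n. lin_fun sc (\<phi>s k)) \<and> (\<forall>x. x = (\<Sum>k<n. sc (\<phi>s k x) (xs k))))"

definition bil :: "('n::ab_group_add \<Rightarrow> 'r::comm_ring_1) \<Rightarrow> 'n \<Rightarrow> 'n \<Rightarrow> 'r" where
  "bil q x y = q (x + y) - q x - q y"

definition quad_form :: "('r::comm_ring_1 \<Rightarrow> 'n::ab_group_add \<Rightarrow> 'n) \<Rightarrow> ('n \<Rightarrow> 'r) \<Rightarrow> bool" where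
  "quad_form sc q \<longleftrightarrow> (\<forall>r x. q (sc r x) = r\<^sup>2 * q x) \<and> (\<forall>x. lin_fun sc (bil q x))"

definition nondegenerate :: "('r::comm_ring_1 \<Rightarrow> 'n::ab_group_add \<Rightarrow> 'n) \<Rightarrow> ('n \<Rightarrow> 'r) \<Rightarrow> bool" where
  "nondegenerate sc q \<longleftrightarrow> (\<forall>\<phi>. lin_fun sc \<phi> \<longrightarrow> (\<exists>!y. \<phi> = bil q y))"

definition quadratic_space :: "('r::comm_ring_1 \<Rightarrow> 'n::ab_group_add \<Rightarrow> 'n) \<Rightarrow> ('n \<Rightarrow> 'r) \<Rightarrow> bool" where
  "quadratic_space sc q \<longleftrightarrow> module sc \<and> fg_projective sc \<and> quad_form sc q \<and> nondegenerate sc q"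

definition ESD_trans :: "('r::comm_ring_1 \<Rightarrow> 'n::ab_group_add \<Rightarrow> 'n) \<Rightarrow> ('n \<Rightarrow> 'r) \<Rightarrow> 'n \<Rightarrow> 'n \<Rightarrow> 'n \<Rightarrow> 'n" where
  "ESD_trans sc q u v = (\<lambda>x. x + sc (bil q v x) u - sc (bil q u x) v - sc (q v * bil q u x) u)"

definition is_ESD :: "('r::comm_ring_1 \<Rightarrow> 'n::ab_group_add \<Rightarrow> 'n) \<Rightarrow> ('n \<Rightarrow> 'r) \<Rightarrow> ('n \<Rightarrow> 'n) \<Rightarrow> bool" where
  "is_ESD sc q \<sigma> \<longleftrightarrow> (\<exists>u v. unimodular sc u \<and> q u = 0 \<and> bil q u v = 0 \<and> \<sigma> = ESD_trans sc q u v)"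

text \<open>The group generated by the ESD transvections (each is bijective).\<close>
inductive_set TransO :: "('r::comm_ring_1 \<Rightarrow> 'n::ab_group_add \<Rightarrow> 'n) \<Rightarrow> ('n \<Rightarrow> 'r) \<Rightarrow> ('n \<Rightarrow> 'n) set"
  for sc q where
  TransO_id: "id \<in> TransO sc q"
| TransO_comp: "g \<in> TransO sc q \<Longrightarrow> is_ESD sc q \<sigma> \<Longrightarrow> \<sigma> \<circ> g \<in> TransO sc q"
| TransO_inv: "g \<in> TransO sc q \<Longrightarrow> is_ESD sc q \<sigma> \<Longrightarrow> inv \<sigma> \<circ> g \<in> TransO sc q"

text \<open>M[X] = M \<otimes> R[X] is modelled as polynomials with coefficients in M.\<close>
definition pscale :: "('r::comm_ring_1 \<Rightarrow> 'n::ab_group_add \<Rightarrow> 'n) \<Rightarrow> 'r poly \<Rightarrow> 'n poly \<Rightarrow> 'n poly" where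
  "pscale sc p f = (\<Sum>i\<le>degree p. \<Sum>j\<le>degree f. monom (sc (coeff p i) (coeff f j)) (i + j))"

definition polyq :: "('n::ab_group_add \<Rightarrow> 'r::comm_ring_1) \<Rightarrow> 'n poly \<Rightarrow> 'r poly" where
  "polyq q f = (\<Sum>i\<le>degree f. monom (q (coeff f i)) (2 * i))
     + (\<Sum>j\<le>degree f. \<Sum>i<j. monom (bil q (coeff f i) (coeff f j)) (i + j))"

definition peval :: "('r::comm_ring_1 \<Rightarrow> 'n::ab_group_add \<Rightarrow> 'n) \<Rightarrow> 'r \<Rightarrow> 'n poly \<Rightarrow> 'n" where
  "peval sc c f = (\<Sum>i\<le>degree f. sc (c ^ i) (coeff f i))"

definition spec :: "('r::comm_ring_1 \<Rightarrow> 'n::ab_group_add \<Rightarrow> 'n) \<Rightarrow> ('n poly \<Rightarrow> 'n poly) \<Rightarrow> 'r \<Rightarrow> 'n \<Rightarrow> 'n" where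
  "spec sc \<beta> c = (\<lambda>x. peval sc c (\<beta> [:x:]))"

end

theory Submission
  imports Defs
begin

lemma lin_fun_zero: "lin_fun sc \<phi> \<Longrightarrow> \<phi> 0 = 0"
  unfolding lin_fun_def by (metis add_cancel_right_right add_0)

lemma lin_fun_sum: "lin_fun sc \<phi> \<Longrightarrow> \<phi> (sum f A) = (\<Sum>x\<in>A. \<phi> (f x))"
  by (induction A rule: infinite_finite_induct) (auto simp: lin_fun_zero lin_fun_def)

definition lsum :: "(nat \<Rightarrow> 'n \<Rightarrow> 'b) \<Rightarrow> 'n::zero poly \<Rightarrow> 'b::comm_monoid_add" where
  "lsum g f = (\<Sum>i\<le>degree f. g i (coeff f i))"

lemma lsum_ext:
  assumes "\<And>i. g i 0 = 0" "degree f \<le> N"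
  shows "lsum g f = (\<Sum>i\<le>N. g i (coeff f i))"
  unfolding lsum_def using assms(2)
  by (intro sum.mono_neutral_left) (auto simp: assms(1) coeff_eq_0)

lemma lsum_add:
  fixes g :: "nat \<Rightarrow> 'n::comm_monoid_add \<Rightarrow> 'b::comm_monoid_add"
  assumes "\<And>i. g i 0 = 0" "\<And>i x y. g i (x + y) = g i x + g i y"
  shows "lsum g (f + h) = lsum g f + lsum g h"
proof -
  define N where "N = max (degree f) (degree h)"
  have d: "degree f \<le> N" "degree h \<le> N" "degree (f + h) \<le> N"
    unfolding N_def using degree_add_le_max[of f h] by auto
  show ?thesis
    unfolding lsum_ext[of g, OF assms(1) d(1)] lsum_ext[of g, OF assms(1) d(2)] lsum_ext[of g, OF assms(1) d(3)]
    by (simp add: assms(2) sum.distrib)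
qed

lemma lsum_zero: "g 0 0 = 0 \<Longrightarrow> lsum g 0 = 0"
  unfolding lsum_def by simp

lemma lsum_monom:
  assumes "\<And>i. g i 0 = 0"
  shows "lsum g (monom a n) = g n a"
proof -
  have "lsum g (monom a n) = (\<Sum>i\<le>n. g i (coeff (monom a n) i))"
    by (rule lsum_ext[of g, OF assms]) (simp add: degree_monom_le)
  also have "\<dots> = (\<Sum>i\<le>n. if i = n then g n a else 0)"
    by (intro sum.cong) (auto simp: coeff_monom assms)
  finally show ?thesis by simp
qed

lemma lsum_sum:
  fixes g :: "nat \<Rightarrow> 'n::comm_monoid_add \<Rightarrow> 'b::comm_monoid_add"
  assumes "\<And>i. g i 0 = 0" "\<And>i x y. g i (x + y) = g i x + g i y"
  shows "lsum g (\<Sum>k\<in>A. F k) = (\<Sum>k\<in>A. lsum g (F k))"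
  by (induction A rule: infinite_finite_induct)
     (auto simp: lsum_zero assms lsum_add[OF assms])

lemma peval_lsum: "peval sc c = lsum (\<lambda>i. sc (c ^ i))"
  unfolding peval_def lsum_def by (rule ext) simp

locale qmod = module sc for sc :: "'a::comm_ring_1 \<Rightarrow> 'm::ab_group_add \<Rightarrow> 'm" +
  fixes q :: "'m \<Rightarrow> 'a"
  assumes qf: "quad_form sc q"
begin

lemma q_scale: "q (sc r x) = r^2 * q x"
  using qf unfolding quad_form_def by auto

lemma b_lin: "lin_fun sc (bil q x)"
  using qf unfolding quad_form_def by auto

lemma b_add2: "bil q x (y + z) = bil q x y + bil q x z"
  using b_lin unfolding lin_fun_def by auto

lemma b_sc2: "bil q x (sc r y) = r * bil q x y"
  using b_lin unfolding lin_fun_def by auto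

lemma b_sym: "bil q x y = bil q y x"
  unfolding bil_def add.commute[of x y] by (simp only: diff_diff_eq add.commute)

lemma b_add1: "bil q (y + z) x = bil q y x + bil q z x"
  by (simp only: b_sym[of "y+z" x] b_sym[of y x] b_sym[of z x] b_add2)

lemma b_sc1: "bil q (sc r y) x = r * bil q y x"
  by (simp only: b_sym[of "sc r y" x] b_sym[of y x] b_sc2)

lemma q0: "q 0 = 0"
  using q_scale[of 0 0] by simp

lemma b0: "bil q 0 x = 0" "bil q x 0 = 0"
  unfolding bil_def by (simp_all add: q0)

lemma b_neg2: "bil q x (- y) = - bil q x y"
  using b_sc2[of x "-1" y] by simp

lemma b_neg1: "bil q (- y) x = - bil q y x"
  by (simp only: b_sym[of "- y" x] b_sym[of y x] b_neg2)

lemma b_diff2: "bil q x (y - z) = bil q x y - bil q x z"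
  by (simp only: diff_conv_add_uminus b_add2 b_neg2)

lemma b_diff1: "bil q (y - z) x = bil q y x - bil q z x"
  by (simp only: diff_conv_add_uminus b_add1 b_neg1)

lemma q_neg: "q (- x) = q x"
  using q_scale[of "-1" x] by simp

lemma b_self: "bil q x x = 2 * q x"
proof -
  have "x + x = sc 2 x" using scale_left_distrib[of 1 1 x] by simp
  then have "q (x + x) = 4 * q x" using q_scale[of 2 x] by simp
  then show ?thesis unfolding bil_def by (simp add: algebra_simps)
qed

lemma sc2: "sc (a * (2 * c)) w = sc (a*c) w + sc (a*c) w"
proof -
  have "a*(2*c) = 2*(a*c)" by (rule mult.left_commute)
  also have "\<dots> = a*c + a*c" by (rule mult_2)
  finally have "a*(2*c) = a*c + a*c" .
  then show ?thesis by (simp only: scale_left_distrib)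
qed

lemma ESD_inv:
  assumes "q u = 0" "bil q u v = 0"
  shows "ESD_trans sc q u v (ESD_trans sc q u (- v) x) = x"
proof -
  define y where "y = ESD_trans sc q u (- v) x"
  have buu: "bil q u u = 0" using b_self assms by simp
  have y: "y = x - sc (bil q v x) u - sc (bil q u x) (- v) - sc (q v * bil q u x) u"
    unfolding y_def ESD_trans_def by (simp add: b_neg1 q_neg algebra_simps)
  have buy: "bil q u y = bil q u x"
    unfolding y by (simp add: b_diff2 b_add2 b_sc2 b_neg2 buu assms)
  have bvy: "bil q v y = bil q v x + 2 * q v * bil q u x"
    unfolding y by (simp add: b_diff2 b_add2 b_sc2 b_neg2 b_self b_sym[of v u] assms algebra_simps)
  show ?thesis
    unfolding y_def[symmetric] unfolding ESD_trans_def buy bvy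
    unfolding y by (simp add: algebra_simps sc2)
qed


lemma peval_add: "peval sc c (f + g) = peval sc c f + peval sc c g"
  unfolding peval_lsum by (rule lsum_add) (simp_all add: scale_right_distrib)

lemma peval_diff: "peval sc c (f - g) = peval sc c f - peval sc c g"
proof -
  have "peval sc c f = peval sc c (f - g) + peval sc c g"
    using peval_add[of c "f - g" g] by simp
  then show ?thesis by (simp add: algebra_simps)
qed

lemma peval_monom: "peval sc c (monom a n) = sc (c ^ n) a"
  unfolding peval_lsum by (rule lsum_monom) simp

lemma peval_sum: "peval sc c (\<Sum>k\<in>A. F k) = (\<Sum>k\<in>A. peval sc c (F k))"
  unfolding peval_lsum by (rule lsum_sum) (simp_all add: scale_right_distrib)

lemma peval_const: "peval sc c [:x:] = x"
  unfolding peval_def by simp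

lemma peval_pscale: "peval sc c (pscale sc p f) = sc (poly p c) (peval sc c f)"
proof -
  have "peval sc c (pscale sc p f) =
     (\<Sum>i\<le>degree p. \<Sum>j\<le>degree f. sc (c ^ (i + j)) (sc (coeff p i) (coeff f j)))"
    unfolding pscale_def by (simp add: peval_sum peval_monom)
  also have "\<dots> = (\<Sum>i\<le>degree p. \<Sum>j\<le>degree f. sc (coeff p i * c ^ i) (sc (c ^ j) (coeff f j)))"
    by (intro sum.cong refl) (simp add: power_add mult_ac)
  also have "\<dots> = (\<Sum>i\<le>degree p. sc (coeff p i * c ^ i) (\<Sum>j\<le>degree f. sc (c ^ j) (coeff f j)))"
    by (simp only: scale_sum_right)
  also have "\<dots> = sc (poly p c) (peval sc c f)"
    unfolding poly_altdef peval_def by (simp only: scale_sum_left)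
  finally show ?thesis .
qed

lemma q_sum: "q (\<Sum>i<(n::nat). x i) = (\<Sum>i<n. q (x i)) + (\<Sum>j<n. \<Sum>i<j. bil q (x i) (x j))"
proof (induction n)
  case 0
  then show ?case by (simp add: q0)
next
  case (Suc n)
  have e: "q (a + b) = q a + q b + bil q a b" for a b
    unfolding bil_def by (simp add: algebra_simps)
  have "bil q (\<Sum>i<n. x i) (x n) = (\<Sum>i<n. bil q (x i) (x n))"
    using lin_fun_sum[OF b_lin[of "x n"], of x "{..<n}"] by (simp add: b_sym)
  then have "bil q (x n) (\<Sum>i<n. x i) = (\<Sum>i<n. bil q (x i) (x n))"
    using b_sym[of "x n" "\<Sum>i<n. x i"] by simp
  then show ?case using Suc by (simp add: e algebra_simps)
qed

lemma polyq_ext: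
  assumes "degree f \<le> N"
  shows "polyq q f = (\<Sum>i\<le>N. monom (q (coeff f i)) (2 * i))
     + (\<Sum>j\<le>N. \<Sum>i<j. monom (bil q (coeff f i) (coeff f j)) (i + j))"
proof -
  have 1: "(\<Sum>i\<le>degree f. monom (q (coeff f i)) (2 * i)) = (\<Sum>i\<le>N. monom (q (coeff f i)) (2 * i))"
    using assms by (intro sum.mono_neutral_left) (auto simp: q0 coeff_eq_0)
  have 2: "(\<Sum>j\<le>degree f. \<Sum>i<j. monom (bil q (coeff f i) (coeff f j)) (i + j))
     = (\<Sum>j\<le>N. \<Sum>i<j. monom (bil q (coeff f i) (coeff f j)) (i + j))"
    using assms by (intro sum.mono_neutral_left) (auto simp: b0 coeff_eq_0)
  show ?thesis unfolding polyq_def 1 2 ..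
qed

lemma poly_polyq: "poly (polyq q f) c = q (peval sc c f)"
proof -
  let ?x = "\<lambda>i. sc (c ^ i) (coeff f i)"
  have "peval sc c f = (\<Sum>i<Suc (degree f). ?x i)"
    unfolding peval_def lessThan_Suc_atMost ..
  then have "q (peval sc c f) = (\<Sum>i<Suc (degree f). q (?x i)) + (\<Sum>j<Suc (degree f). \<Sum>i<j. bil q (?x i) (?x j))"
    by (simp only: q_sum)
  also have "\<dots> = (\<Sum>i\<le>degree f. q (coeff f i) * c ^ (2 * i))
      + (\<Sum>j\<le>degree f. \<Sum>i<j. bil q (coeff f i) (coeff f j) * c ^ (i + j))"
    unfolding lessThan_Suc_atMost
    by (simp add: q_scale b_sc1 b_sc2 power_add power_mult mult_ac power2_eq_square flip: power_mult_distrib)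
  also have "\<dots> = poly (polyq q f) c"
    unfolding polyq_def by (simp add: poly_sum poly_monom)
  finally show ?thesis ..
qed

lemma poly_bilP: "poly (bil (polyq q) f g) c = bil q (peval sc c f) (peval sc c g)"
  unfolding bil_def by (simp add: poly_polyq peval_add)

lemma ESD_commute:
  "peval sc c (ESD_trans (pscale sc) (polyq q) [:u:] (monom v 1) f)
     = ESD_trans sc q u (sc c v) (peval sc c f)"
  unfolding ESD_trans_def
  by (simp add: peval_add peval_diff peval_pscale poly_bilP poly_polyq peval_const peval_monom)

lemma ESD_zero: "ESD_trans sc q u 0 = id"
  unfolding ESD_trans_def by (simp add: b0 q0 id_def)

lemma polyq_const: "q u = 0 \<Longrightarrow> polyq q [:u:] = 0"
  by (subst polyq_ext[of _ 0]) (simp_all add: q0)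

lemma polyq_UV:
  assumes "bil q u v = 0" "q u = 0"
  shows "bil (polyq q) [:u:] (monom v 1) = 0"
proof -
  have d1: "degree ([:u:] + monom v 1) \<le> Suc 0"
    by (metis degree_add_le degree_monom_le degree_pCons_0 le_zero_eq One_nat_def zero_le)
  have d2: "degree (monom v 1) \<le> Suc 0" using degree_monom_le[of v 1] by simp
  have a: "polyq q ([:u:] + monom v 1) = monom (q v) 2"
    by (subst polyq_ext[OF d1]) (simp add: assms q0 coeff_monom numeral_2_eq_2)
  have b: "polyq q (monom v 1) = monom (q v) 2"
    by (subst polyq_ext[OF d2]) (simp add: b0 q0 coeff_monom numeral_2_eq_2)
  show ?thesis unfolding bil_def a b polyq_const[OF assms(2)] by simp
qed

lemma unimod_lift:
  assumes "unimodular sc u"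
  shows "unimodular (pscale sc) [:u:]"
proof -
  obtain \<phi> where \<phi>: "lin_fun sc \<phi>" "\<phi> u = 1"
    using assms unfolding unimodular_def by auto
  define g where "g = (\<lambda>i x. monom (\<phi> x) i)"
  have g0: "g i 0 = 0" for i unfolding g_def using lin_fun_zero[OF \<phi>(1)] by simp
  have gadd: "g i (x + y) = g i x + g i y" for i x y
    unfolding g_def using \<phi>(1) by (simp add: lin_fun_def add_monom)
  have "lin_fun (pscale sc) (lsum g)"
    unfolding lin_fun_def
  proof (intro conjI allI)
    fix x y show "lsum g (x + y) = lsum g x + lsum g y" by (rule lsum_add[of g, OF g0 gadd])
  next
    fix p :: "'a poly" and f :: "'m poly"
    have "lsum g (pscale sc p f) = (\<Sum>i\<le>degree p. \<Sum>j\<le>degree f. monom (coeff p i * \<phi> (coeff f j)) (i + j))"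
      unfolding pscale_def using \<phi>(1)
      by (simp only: lsum_sum[of g, OF g0 gadd] lsum_monom[of g, OF g0]) (simp add: g_def lin_fun_def)
    also have "\<dots> = (\<Sum>i\<le>degree p. monom (coeff p i) i) * lsum g f"
      unfolding lsum_def g_def by (simp add: sum_distrib_left sum_distrib_right mult_monom sum.swap[of _ "{..degree f}"])
    also have "\<dots> = p * lsum g f" by (simp add: poly_as_sum_of_monoms)
    finally show "lsum g (pscale sc p f) = p * lsum g f" .
  qed
  moreover have "lsum g [:u:] = 1"
    unfolding lsum_def g_def using \<phi>(2) by (simp add: one_pCons monom_0)
  ultimately show ?thesis unfolding unimodular_def by blast
qed

lemma lift_step:
  assumes "unimodular sc u" "q u = 0" "bil q u v = 0"
    and "\<beta> \<in> TransO (pscale sc) (polyq q)" "spec sc \<beta> 1 = g" "spec sc \<beta> 0 = id"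
  shows "\<exists>\<beta>' \<in> TransO (pscale sc) (polyq q). spec sc \<beta>' 1 = ESD_trans sc q u v \<circ> g \<and> spec sc \<beta>' 0 = id"
proof -
  define T where "T = ESD_trans (pscale sc) (polyq q) [:u:] (monom v 1)"
  have "is_ESD (pscale sc) (polyq q) T"
    unfolding is_ESD_def T_def
    using unimod_lift[OF assms(1)] polyq_const[OF assms(2)] polyq_UV[OF assms(3,2)] by blast
  then have mem: "T \<circ> \<beta> \<in> TransO (pscale sc) (polyq q)" by (rule TransO_comp[OF assms(4)])
  have sp: "spec sc (T \<circ> \<beta>) c = ESD_trans sc q u (sc c v) \<circ> spec sc \<beta> c" for c
    unfolding spec_def T_def by (rule ext) (simp only: comp_apply ESD_commute)
  show ?thesis
    by (rule bexI[OF _ mem]) (simp add: sp assms ESD_zero)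
qed

end

theorem mainTheorem16:
  fixes sc :: "'a::comm_ring_1 \<Rightarrow> 'm::ab_group_add \<Rightarrow> 'm"
    and q :: "'m \<Rightarrow> 'a"
    and \<alpha> :: "'m \<Rightarrow> 'm"
  assumes "\<exists>h::'a. 2 * h = 1"
    and "quadratic_space sc q"
    and "\<alpha> \<in> TransO sc q"
  shows "\<exists>\<beta> \<in> TransO (pscale sc) (polyq q). spec sc \<beta> 1 = \<alpha> \<and> spec sc \<beta> 0 = id"
proof -
  have "module sc" "quad_form sc q"
    using assms(2) unfolding quadratic_space_def by auto
  then interpret qmod sc q by (simp add: qmod_def qmod_axioms_def)
  have spec_id: "spec sc id c = id" for c
    unfolding spec_def by (rule ext) (simp add: peval_const)
  show ?thesis using assms(3)
  proof (induction rule: TransO.induct)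
    case TransO_id
    show ?case by (rule bexI[OF _ TransO.TransO_id]) (simp only: spec_id)
  next
    case (TransO_comp g \<sigma>)
    then obtain u v where uv: "unimodular sc u" "q u = 0" "bil q u v = 0" "\<sigma> = ESD_trans sc q u v"
      unfolding is_ESD_def by blast
    obtain \<beta> where "\<beta> \<in> TransO (pscale sc) (polyq q)" "spec sc \<beta> 1 = g" "spec sc \<beta> 0 = id"
      using TransO_comp by blast
    from lift_step[OF uv(1-3) this] show ?case unfolding uv(4) .
  next
    case (TransO_inv g \<sigma>)
    then obtain u v where uv: "unimodular sc u" "q u = 0" "bil q u v = 0" "\<sigma> = ESD_trans sc q u v"
      unfolding is_ESD_def by blast
    have uv': "bil q u (- v) = 0" using uv(3) by (simp add: b_neg2)
    have "inv \<sigma> = ESD_trans sc q u (- v)"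
      unfolding uv(4)
    proof (rule inv_equality)
      fix x show "ESD_trans sc q u (- v) (ESD_trans sc q u v x) = x"
        using ESD_inv[OF uv(2) uv'] by simp
    next
      fix y show "ESD_trans sc q u v (ESD_trans sc q u (- v) y) = y"
        using ESD_inv[OF uv(2,3)] by simp
    qed
    moreover obtain \<beta> where "\<beta> \<in> TransO (pscale sc) (polyq q)" "spec sc \<beta> 1 = g" "spec sc \<beta> 0 = id"
      using TransO_inv by blast
    note lift_step[OF uv(1,2) uv' this]
    ultimately show ?case by (simp only:)
  qed
qed

end
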